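(* Let $t\in\mathbb{R}^d$, $h>0$, and $\kappa_t:\mathbb{R}^d\to\mathbb{R}_{\ge0}$, $\kappa_t(x)=e^{-\frac{\|x-t\|^2}{2h^2}}$, with $\mathbb{R}^d$ carrying the Euclidean metric. Let $g(x,x')=g_0(\|x-x'\|)$ be a smooth growth function. Let $(w^*,z^* )$ with $w^*\ne z^*$ be such that $B^*(t)=\frac{|\kappa_t(w^* )-\kappa_t(z^* )|}{\|w^*-z^*\|\,g(t,z^* )}$, and assume $z^*\ne t$. Then there is a point $w_L$ on the line connecting $z^*$ and $t$ such that $\frac{|\kappa_t(w_L)-\kappa_t(z^* )|}{\|w_L-z^*\|\,g(t,z^* )}\ge B^*(t)$.
   Context: A smooth growth function is $g(x,x')=g_0(\|x-x'\|)$ with $g_0:\mathbb{R}_{\ge0}\to\mathbb{R}_{\ge1}$ monotonically increasing, $g_0(0)=1$, $g_0(r_1+r_2)\le g_0(r_1)g_0(r_2)$. $B^*(t)$ denotes the $g$-smooth sensitivity of $\kappa_t$ at the point $t$. *)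

theory Defs
  imports "HOL-Analysis.Analysis"
begin

definition smooth_growth :: "(real \<Rightarrow> real) \<Rightarrow> bool" where
  "smooth_growth g0 \<longleftrightarrow>
     mono_on {0..} g0 \<and> (\<forall>r\<ge>0. g0 r \<ge> 1) \<and> g0 0 = 1 \<and>
     (\<forall>r1\<ge>0. \<forall>r2\<ge>0. g0 (r1 + r2) \<le> g0 r1 * g0 r2)"

definition growth :: "(real \<Rightarrow> real) \<Rightarrow> 'a::real_normed_vector \<Rightarrow> 'a \<Rightarrow> real" where
  "growth g0 x x' = g0 (norm (x - x'))"

definition kappa :: "'a::euclidean_space \<Rightarrow> real \<Rightarrow> 'a \<Rightarrow> real" where
  "kappa t h x = exp (- (norm (x - t))\<^sup>2 / (2 * h\<^sup>2))"

definition smooth_sens :: "(real \<Rightarrow> real) \<Rightarrow> ('a::real_normed_vector \<Rightarrow> real) \<Rightarrow> 'a \<Rightarrow> real" where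
  "smooth_sens g0 f t =
     (SUP p \<in> {(w, z). w \<noteq> z}. \<bar>f (fst p) - f (snd p)\<bar> /
                                   (norm (fst p - snd p) * growth g0 t (snd p)))"

end

theory Submission
  imports Defs
begin

theorem mainTheorem13:
  fixes t w z :: "'a::euclidean_space" and h :: real and g0 :: "real \<Rightarrow> real"
  assumes "h > 0"
    and "smooth_growth g0"
    and "w \<noteq> z"
    and "smooth_sens g0 (kappa t h) t =
           \<bar>kappa t h w - kappa t h z\<bar> / (norm (w - z) * growth g0 t z)"
    and "z \<noteq> t"
  shows "\<exists>wL. (\<exists>s::real. wL = z + s *\<^sub>R (t - z)) \<and> wL \<noteq> z \<and>
           \<bar>kappa t h wL - kappa t h z\<bar> / (norm (wL - z) * growth g0 t z)
             \<ge> smooth_sens g0 (kappa t h) t"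
proof -
  define r where "r = norm (z - t)"
  define a where "a = norm (w - t)"
  have r0: "r > 0" using assms(5) by (simp add: r_def)
  have a0: "a \<ge> 0" by (simp add: a_def)
  have gpos: "growth g0 t z > 0"
    using assms(2) unfolding smooth_growth_def growth_def
    by (metis norm_ge_zero order_less_le_trans zero_less_one)
  show ?thesis
  proof (cases "a = r")
    case True
    have "kappa t h w = kappa t h z" unfolding kappa_def
      using True by (simp add: a_def r_def)
    hence B0: "smooth_sens g0 (kappa t h) t = 0" using assms(4) by simp
    show ?thesis
    proof (intro exI conjI)
      show "t = z + 1 *\<^sub>R (t - z)" by simp
      show "t \<noteq> z" using assms(5) by simp
      show "smooth_sens g0 (kappa t h) t \<le>
         \<bar>kappa t h t - kappa t h z\<bar> / (norm (t - z) * growth g0 t z)"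
        using B0 gpos by simp
    qed
  next
    case False
    define s where "s = 1 - a / r"
    define wL where "wL = z + s *\<^sub>R (t - z)"
    have wL': "wL = t + (a / r) *\<^sub>R (z - t)"
      unfolding wL_def s_def by (simp add: algebra_simps)
    have nwt: "norm (wL - t) = a"
      unfolding wL' using r0 a0 by (simp add: r_def)
    have "wL - z = (a / r - 1) *\<^sub>R (z - t)"
      unfolding wL' by (simp add: algebra_simps)
    hence nwz: "norm (wL - z) = \<bar>a - r\<bar>"
      using r0 by (simp add: r_def divide_simps abs_mult)
    have d0: "\<bar>a - r\<bar> > 0" using False by simp
    have dle: "\<bar>a - r\<bar> \<le> norm (w - z)"
      unfolding a_def r_def by (metis norm_triangle_ineq3 diff_diff_eq2 add_diff_cancel_right' diff_add_cancel
          norm_minus_commute)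
    have kw: "kappa t h wL = kappa t h w"
      unfolding kappa_def using nwt by (simp add: a_def)
    have "\<bar>kappa t h w - kappa t h z\<bar> / (norm (w - z) * growth g0 t z)
        \<le> \<bar>kappa t h w - kappa t h z\<bar> / (\<bar>a - r\<bar> * growth g0 t z)"
      proof (rule divide_left_mono)
      show "\<bar>a - r\<bar> * growth g0 t z \<le> norm (w - z) * growth g0 t z"
        using dle gpos by simp
      have "norm (w - z) > 0" using d0 dle by linarith
      thus "0 < norm (w - z) * growth g0 t z * (\<bar>a - r\<bar> * growth g0 t z)"
        using d0 gpos by simp
    qed simp
    hence ineq: "smooth_sens g0 (kappa t h) t \<le>
         \<bar>kappa t h wL - kappa t h z\<bar> / (norm (wL - z) * growth g0 t z)"
      using assms(4) nwz kw by simp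
    have ne: "wL \<noteq> z" using nwz d0 by auto
    show ?thesis
      by (rule exI[of _ wL]) (use ineq ne wL_def in blast)
  qed
qed

end
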